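(* Let $n\ge1$, $1\le M\le 2^{n-1}$, $a:=M/2^n$, and let $f:\{-1,1\}^n\to\{-1,1\}$ satisfy $|f^{-1}(1)|=M$. Then \[ \mathbf{W}_1\le 8a^{2}\varphi(a),\qquad \varphi(a):=\begin{cases}\frac{1}{\sqrt{a}}-1, & 0< a\le\frac14,\\[2pt] \frac{1}{4a}, & \frac14<a\le\frac12.\end{cases} \]
   Context: For $f:\{-1,1\}^n\to\{-1,1\}$ and $S\subseteq[1:n]$, the Fourier coefficient is $\hat f_S:=\mathbb{E}_{\mathbf{x}\sim\mathrm{Unif}\{-1,1\}^n}[f(\mathbf{x})\prod_{i\in S}x_i]$, and the degree-$m$ Fourier weight is $\mathbf{W}_m:=\sum_{S:|S|=m}\hat f_S^{2}$. *)

theory Defs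
  imports "HOL-Analysis.Analysis"
begin

text \<open>The Boolean cube {-1,1}^n, points as extensional functions on {0..<n}
  (coordinate i of the paper is index i-1 here).\<close>
definition cube :: "nat \<Rightarrow> (nat \<Rightarrow> real) set" where
  "cube n = PiE {..<n} (\<lambda>_. {-1, 1})"

definition fourier_coeff :: "nat \<Rightarrow> ((nat \<Rightarrow> real) \<Rightarrow> real) \<Rightarrow> nat set \<Rightarrow> real" where
  "fourier_coeff n f S = (\<Sum>x\<in>cube n. f x * (\<Prod>i\<in>S. x i)) / 2 ^ n"

definition fourier_weight :: "nat \<Rightarrow> ((nat \<Rightarrow> real) \<Rightarrow> real) \<Rightarrow> nat \<Rightarrow> real" where
  "fourier_weight n f m = (\<Sum>S\<in>{S. S \<subseteq> {..<n} \<and> card S = m}. (fourier_coeff n f S)^2)"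

definition phi :: "real \<Rightarrow> real" where
  "phi a = (if a \<le> 1/4 then 1 / sqrt a - 1 else 1 / (4 * a))"

end

theory Submission
  imports Defs
begin

definition chi :: "nat set \<Rightarrow> (nat \<Rightarrow> real) \<Rightarrow> real" where
  "chi T x = (\<Prod>i\<in>T. x i)"

lemma kernel_expand:
  fixes c :: real
  shows "(\<Prod>i<n. 1 + c * (x i * y i)) = (\<Sum>T\<in>Pow {..<n}. c ^ card T * (chi T x * chi T y))"
proof -
  have "(\<Prod>i<n. 1 + c * (x i * y i)) = (\<Prod>i<n. c * (x i * y i) + 1)" by (simp add: add.commute)
  also have "\<dots> = (\<Sum>T\<in>Pow {..<n}. (\<Prod>i\<in>T. c * (x i * y i)) * (\<Prod>i\<in>{..<n}-T. 1))"
    by (rule prod_add) simp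
  also have "\<dots> = (\<Sum>T\<in>Pow {..<n}. c ^ card T * (chi T x * chi T y))"
    by (simp add: chi_def prod.distrib)
  finally show ?thesis .
qed

lemma kernel_sum:
  fixes c :: real and A :: "(nat \<Rightarrow> real) set"
  assumes "finite A"
  shows "(\<Sum>x\<in>A. \<Sum>y\<in>A. \<Prod>i<n. 1 + c * (x i * y i))
       = (\<Sum>T\<in>Pow {..<n}. c ^ card T * (\<Sum>x\<in>A. chi T x)^2)"
proof -
  have "(\<Sum>x\<in>A. \<Sum>y\<in>A. \<Prod>i<n. 1 + c * (x i * y i))
     = (\<Sum>x\<in>A. \<Sum>y\<in>A. \<Sum>T\<in>Pow {..<n}. c ^ card T * (chi T x * chi T y))"
    by (simp add: kernel_expand)
  also have "\<dots> = (\<Sum>T\<in>Pow {..<n}. \<Sum>x\<in>A. \<Sum>y\<in>A. c ^ card T * (chi T x * chi T y))"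
  proof -
    have "\<And>x. (\<Sum>y\<in>A. \<Sum>T\<in>Pow {..<n}. c ^ card T * (chi T x * chi T y))
       = (\<Sum>T\<in>Pow {..<n}. \<Sum>y\<in>A. c ^ card T * (chi T x * chi T y))"
      by (rule sum.swap)
    then show ?thesis by (simp only:) (rule sum.swap)
  qed
  also have "\<dots> = (\<Sum>T\<in>Pow {..<n}. c ^ card T * (\<Sum>x\<in>A. chi T x)^2)"
    by (simp add: power2_eq_square sum_distrib_left sum_distrib_right mult_ac)
  finally show ?thesis .
qed

lemma cube_sq: "x \<in> cube n \<Longrightarrow> i < n \<Longrightarrow> x i = -1 \<or> x i = 1"
  by (auto simp: cube_def PiE_def Pi_def)

lemma cube_ext: "x \<in> cube n \<Longrightarrow> y \<in> cube n \<Longrightarrow> x \<noteq> y \<Longrightarrow> \<exists>i<n. x i \<noteq> y i"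
  unfolding cube_def using PiE_ext by (metis lessThan_iff)

lemma finite_cube: "finite (cube n)"
  unfolding cube_def by (rule finite_PiE) auto

lemma card_cube: "card (cube n) = 2 ^ n"
  unfolding cube_def by (simp add: card_PiE) (metis numeral_2_eq_2)

lemma diag_kernel:
  assumes "x \<in> cube n" "y \<in> cube n"
  shows "(\<Prod>i<n. 1 + 1 * (x i * y i)) = (if x = y then 2 ^ n else (0::real))"
proof (cases "x = y")
  case True
  have "\<And>i. i \<in> {..<n} \<Longrightarrow> 1 + 1 * (x i * y i) = (2::real)"
    using cube_sq[OF assms(1)] True by fastforce
  then have "(\<Prod>i<n. 1 + 1 * (x i * y i)) = (\<Prod>i<n. (2::real))" by (rule prod.cong[OF refl])
  then show ?thesis using True by simp
next
  case False
  then obtain i where i: "i < n" "x i \<noteq> y i" using cube_ext assms by blast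
  have "1 + 1 * (x i * y i) = 0" using cube_sq[OF assms(1) i(1)] cube_sq[OF assms(2) i(1)] i(2) by auto
  then have "(\<Prod>i<n. 1 + 1 * (x i * y i)) = 0" using i(1) by (intro prod_zero) auto
  then show ?thesis using False by simp
qed

lemma diag_sum:
  assumes "A \<subseteq> cube n"
  shows "(\<Sum>x\<in>A. \<Sum>y\<in>A. \<Prod>i<n. 1 + 1 * (x i * y i)) = 2 ^ n * real (card A)"
proof -
  have fin: "finite A" using assms finite_cube finite_subset by blast
  have "(\<Sum>x\<in>A. \<Sum>y\<in>A. \<Prod>i<n. 1 + 1 * (x i * y i)) = (\<Sum>x\<in>A. \<Sum>y\<in>A. if x = y then 2 ^ n else (0::real))"
  proof (intro sum.cong refl)
    fix x y assume "x \<in> A" "y \<in> A"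
    then show "(\<Prod>i<n. 1 + 1 * (x i * y i)) = (if x = y then 2 ^ n else (0::real))"
      using assms by (intro diag_kernel) auto
  qed
  also have "\<dots> = (\<Sum>x\<in>A. 2 ^ n)" using fin by (simp add: sum.delta)
  finally show ?thesis by simp
qed

lemma nonneg_kernel:
  assumes "A \<subseteq> cube n" "0 \<le> r" "r \<le> (1::real)"
  shows "0 \<le> (\<Sum>x\<in>A. \<Sum>y\<in>A. \<Prod>i<n. 1 + (-r) * (x i * y i))"
proof (intro sum_nonneg prod_nonneg)
  fix x y i assume "x \<in> A" "y \<in> A" "i \<in> {..<n}"
  then have "x i = -1 \<or> x i = 1" "y i = -1 \<or> y i = 1" using assms cube_sq by blast+
  then show "0 \<le> 1 + (-r) * (x i * y i)" using assms by auto
qed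

definition Rest :: "nat \<Rightarrow> nat set set" where
  "Rest n = {T. T \<subseteq> {..<n} \<and> 2 \<le> card T}"

lemma pow_split:
  fixes g :: "nat set \<Rightarrow> real"
  shows "(\<Sum>T\<in>Pow {..<n}. g T) = g {} + (\<Sum>i<n. g {i}) + (\<Sum>T\<in>Rest n. g T)"
proof -
  let ?S = "(\<lambda>i. {i}) ` {..<n}"
  have eq: "Pow {..<n} = insert {} (?S \<union> Rest n)"
  proof (rule set_eqI, rule iffI)
    fix T assume T: "T \<in> Pow {..<n}"
    then have fin: "finite T" using finite_subset by blast
    show "T \<in> insert {} (?S \<union> Rest n)"
    proof (cases "card T")
      case 0 then show ?thesis using fin by simp
    next
      case (Suc k)
      show ?thesis
      proof (cases k)
        case 0
        then have "card T = 1" using Suc by simp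
        then obtain i where "T = {i}" by (rule card_1_singletonE)
        then show ?thesis using T by auto
      next
        case (Suc m) then show ?thesis using T \<open>card T = Suc k\<close> by (auto simp: Rest_def)
      qed
    qed
  qed (auto simp: Rest_def)
  have finR: "finite (Rest n)" unfolding Rest_def by (rule finite_subset[of _ "Pow {..<n}"]) auto
  have disj: "?S \<inter> Rest n = {}" by (auto simp: Rest_def)
  have notin: "{} \<notin> ?S \<union> Rest n" by (auto simp: Rest_def)
  have "(\<Sum>T\<in>Pow {..<n}. g T) = g {} + (\<Sum>T\<in>?S \<union> Rest n. g T)"
    unfolding eq using finR notin by (subst sum.insert) auto
  also have "(\<Sum>T\<in>?S \<union> Rest n. g T) = (\<Sum>T\<in>?S. g T) + (\<Sum>T\<in>Rest n. g T)"
    using finR disj by (intro sum.union_disjoint) auto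
  also have "(\<Sum>T\<in>?S. g T) = (\<Sum>i<n. g {i})" by (subst sum.reindex) (auto simp: inj_on_def)
  finally show ?thesis by simp
qed

lemma chi_empty: "chi {} x = 1" and chi_single: "chi {i} x = x i"
  by (simp_all add: chi_def)

lemma expand_split:
  fixes c :: real
  assumes "A \<subseteq> cube n"
  shows "(\<Sum>x\<in>A. \<Sum>y\<in>A. \<Prod>i<n. 1 + c * (x i * y i))
     = real (card A)^2 + c * (\<Sum>i<n. (\<Sum>x\<in>A. x i)^2) + (\<Sum>T\<in>Rest n. c ^ card T * (\<Sum>x\<in>A. chi T x)^2)"
proof -
  have fin: "finite A" using assms finite_cube finite_subset by blast
  show ?thesis
    unfolding kernel_sum[OF fin] pow_split by (simp add: chi_empty chi_single sum_distrib_left)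
qed

lemma key:
  assumes A: "A \<subseteq> cube n" and r: "0 < r" "r \<le> (1::real)"
  shows "r * (1 + r) * (\<Sum>i<n. (\<Sum>x\<in>A. x i)^2)
         \<le> real (card A)^2 * (1 - r^2) + r^2 * 2^n * real (card A)"
proof -
  define Y where "Y = (\<Sum>i<n. (\<Sum>x\<in>A. x i)^2)"
  define R where "R = (\<Sum>T\<in>Rest n. (\<Sum>x\<in>A. chi T x)^2)"
  define M where "M = real (card A)"
  have e1: "2 ^ n * M = M^2 + Y + R"
    using expand_split[OF A, of 1] diag_sum[OF A] by (simp add: Y_def R_def M_def)
  have le: "(\<Sum>T\<in>Rest n. (-r) ^ card T * (\<Sum>x\<in>A. chi T x)^2) \<le> r^2 * R"
    unfolding R_def sum_distrib_left
  proof (rule sum_mono)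
    fix T assume "T \<in> Rest n"
    then have k: "2 \<le> card T" by (simp add: Rest_def)
    have "(-r) ^ card T \<le> \<bar>(-r) ^ card T\<bar>" by (rule abs_ge_self)
    also have "\<dots> = \<bar>-r\<bar> ^ card T" by (rule power_abs)
    also have "\<dots> = r ^ card T" using r by simp
    also have "\<dots> \<le> r ^ 2" using r k by (intro power_decreasing) auto
    finally show "(-r) ^ card T * (\<Sum>x\<in>A. chi T x)^2 \<le> r^2 * (\<Sum>x\<in>A. chi T x)^2"
      by (intro mult_right_mono) auto
  qed
  have e2: "0 \<le> M^2 - r * Y + (\<Sum>T\<in>Rest n. (-r) ^ card T * (\<Sum>x\<in>A. chi T x)^2)"
    using expand_split[OF A, of "-r"] nonneg_kernel[OF A, of r] r by (simp add: Y_def M_def)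
  have "0 \<le> M^2 - r * Y + r^2 * (2 ^ n * M - M^2 - Y)" using e1 e2 le by simp
  then show ?thesis unfolding Y_def[symmetric] M_def[symmetric]
    by (simp add: algebra_simps power2_eq_square)
qed

lemma sum_coord_zero:
  assumes "i < n"
  shows "(\<Sum>x\<in>cube n. x i) = 0"
proof -
  define Y where "Y = (\<Sum>i<n. (\<Sum>x\<in>cube n. x i)^2)"
  define R where "R = (\<Sum>T\<in>Rest n. (\<Sum>x\<in>cube n. chi T x)^2)"
  have "2 ^ n * real (card (cube n)) = real (card (cube n))^2 + Y + R"
    using expand_split[of "cube n" n 1] diag_sum[of "cube n" n] by (simp add: Y_def R_def)
  then have "Y + R = 0" by (simp add: card_cube power2_eq_square power_mult_distrib)
  moreover have "0 \<le> Y" "0 \<le> R" unfolding Y_def R_def by (auto intro: sum_nonneg)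
  ultimately have "Y = 0" by simp
  then have "\<forall>j\<in>{..<n}. (\<Sum>x\<in>cube n. x j)^2 = 0"
    unfolding Y_def by (subst sum_nonneg_eq_0_iff[symmetric]) auto
  then show ?thesis using assms by simp
qed

lemma weight_eq: "fourier_weight n f 1 = (\<Sum>i<n. (fourier_coeff n f {i})^2)"
proof -
  have "{S. S \<subseteq> {..<n} \<and> card S = 1} = (\<lambda>i. {i}) ` {..<n}"
  proof (rule set_eqI, rule iffI)
    fix S assume "S \<in> {S. S \<subseteq> {..<n} \<and> card S = 1}"
    then have "S \<subseteq> {..<n}" "card S = 1" by auto
    then show "S \<in> (\<lambda>i. {i}) ` {..<n}" by (metis card_1_singletonE image_eqI insert_subset)
  qed auto
  then show ?thesis unfolding fourier_weight_def
    by (simp add: sum.reindex inj_on_def)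
qed

lemma coeff_eq:
  assumes f: "\<forall>x\<in>cube n. f x \<in> {-1, 1}" and i: "i < n"
  shows "fourier_coeff n f {i} = 2 * (\<Sum>x\<in>{x\<in>cube n. f x = 1}. x i) / 2 ^ n"
proof -
  have "(\<Sum>x\<in>cube n. f x * x i) = (\<Sum>x\<in>cube n. 2 * (if f x = 1 then x i else 0) - x i)"
  proof (rule sum.cong[OF refl])
    fix x assume "x \<in> cube n"
    then have "f x = -1 \<or> f x = 1" using f by auto
    then show "f x * x i = 2 * (if f x = 1 then x i else 0) - x i" by auto
  qed
  also have "\<dots> = 2 * (\<Sum>x\<in>cube n. (if f x = 1 then x i else 0)) - (\<Sum>x\<in>cube n. x i)"
    by (simp add: sum_subtractf sum_distrib_left)
  also have "\<dots> = 2 * (\<Sum>x\<in>{x\<in>cube n. f x = 1}. x i)"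
    using sum_coord_zero[OF i] finite_cube by (simp add: sum.inter_filter)
  finally show ?thesis unfolding fourier_coeff_def by simp
qed

theorem corollary1:
  fixes n M :: nat and f :: "(nat \<Rightarrow> real) \<Rightarrow> real"
  assumes "n \<ge> 1"
    and "1 \<le> M" and "M \<le> 2 ^ (n - 1)"
    and "\<forall>x\<in>cube n. f x \<in> {-1, 1}"
    and "card {x\<in>cube n. f x = 1} = M"
  shows "fourier_weight n f 1 \<le> 8 * (real M / 2 ^ n)^2 * phi (real M / 2 ^ n)"
proof -
  define A where "A = {x\<in>cube n. f x = 1}"
  have A: "A \<subseteq> cube n" by (auto simp: A_def)
  define Y where "Y = (\<Sum>i<n. (\<Sum>x\<in>A. x i)^2)"
  define N :: real where "N = 2 ^ n"
  define a where "a = real M / N"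
  have N: "N > 0" by (simp add: N_def)
  have W: "fourier_weight n f 1 = 4 * Y / N^2"
  proof -
    have "fourier_weight n f 1 = (\<Sum>i<n. 4 * (\<Sum>x\<in>A. x i)^2 / N^2)"
      unfolding weight_eq
    proof (rule sum.cong[OF refl])
      fix i assume "i \<in> {..<n}"
      then show "(fourier_coeff n f {i})^2 = 4 * (\<Sum>x\<in>A. x i)^2 / N^2"
        using coeff_eq[OF assms(4), of i] by (simp add: A_def N_def power_divide power_mult_distrib)
    qed
    then show ?thesis by (simp add: Y_def sum_divide_distrib sum_distrib_left)
  qed
  have MN: "real M = a * N" using N by (simp add: a_def)
  have a0: "a > 0" using assms(2) N by (simp add: a_def)
  have "real M \<le> 2 ^ (n - 1)" using assms(3) by (metis of_nat_le_iff of_nat_numeral of_nat_power)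
  then have "2 * real M \<le> N" using assms(1) unfolding N_def
    by (metis Suc_diff_1 less_le_trans mult_le_cancel_left_pos power_Suc zero_less_numeral zero_less_one le_imp_less_Suc)
  then have a12: "a \<le> 1/2" using N by (simp add: a_def field_simps)
  have keyA: "\<And>r. 0 < r \<Longrightarrow> r \<le> 1 \<Longrightarrow> r * (1 + r) * Y \<le> N^2 * (a^2 * (1 - r^2) + r^2 * a)"
  proof -
    fix r :: real assume r: "0 < r" "r \<le> 1"
    have "r * (1 + r) * Y \<le> real M ^ 2 * (1 - r^2) + r^2 * N * real M"
      using key[OF A r] assms(5) by (simp add: Y_def A_def N_def)
    then show "r * (1 + r) * Y \<le> N^2 * (a^2 * (1 - r^2) + r^2 * a)"
      by (simp add: MN algebra_simps power2_eq_square)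
  qed
  show ?thesis
  proof (cases "a \<le> 1/4")
    case True
    define s where "s = sqrt a"
    have s0: "s > 0" using a0 by (simp add: s_def)
    have s12: "s \<le> 1/2" using True unfolding s_def
      by (metis real_sqrt_le_iff real_sqrt_one real_sqrt_divide real_sqrt_four)
    have as: "a = s^2" using a0 by (simp add: s_def)
    define r where "r = s / (1 - s)"
    have r0: "0 < r" using s0 s12 by (simp add: r_def)
    have r1: "r \<le> 1" using s0 s12 by (simp add: r_def field_simps)
    have k: "r * (1 + r) * Y \<le> N^2 * (a^2 * (1 - r^2) + r^2 * a)" by (rule keyA[OF r0 r1])
    have e1: "r * (1 + r) = s / (1 - s)^2" using s12 by (simp add: r_def field_simps power2_eq_square)
    have e2: "a^2 * (1 - r^2) + r^2 * a = 2 * s^4 / (1 - s)"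
      unfolding r_def as
      apply (subgoal_tac "1 - s \<noteq> 0")
       apply (simp add: field_simps)
       apply algebra
      using s12 by simp
    have "s / (1 - s)^2 * Y \<le> N^2 * (2 * s^4 / (1 - s))" using k e1 e2 by simp
    then have "Y \<le> N^2 * (2 * s^3 * (1 - s))"
    proof -
      assume h: "s / (1 - s)^2 * Y \<le> N^2 * (2 * s^4 / (1 - s))"
      have ne: "1 - s \<noteq> 0" "s \<noteq> 0" using s0 s12 by auto
      have pos: "0 \<le> (1 - s)^2 / s" using s0 by simp
      have "Y = ((1 - s)^2 / s) * (s / (1 - s)^2 * Y)" using ne by (simp add: field_simps)
      also have "\<dots> \<le> ((1 - s)^2 / s) * (N^2 * (2 * s^4 / (1 - s)))"
        by (rule mult_left_mono[OF h pos])
      also have "\<dots> = N^2 * (2 * s^3 * (1 - s))"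
        using ne apply (simp add: field_simps) by algebra
      finally show ?thesis .
    qed
    then have "4 * Y / N^2 \<le> 8 * s^3 - 8 * s^4" using N
      by (simp add: field_simps power_def)
    moreover have "8 * a^2 * phi a = 8 * s^3 - 8 * s^4" using True s0
      by (simp add: phi_def as s_def[symmetric] field_simps power_def)
    ultimately show ?thesis using W by (simp add: a_def N_def)
  next
    case False
    have k: "1 * (1 + 1) * Y \<le> N^2 * (a^2 * (1 - 1^2) + 1^2 * a)" by (rule keyA) auto
    then have "4 * Y / N^2 \<le> 2 * a" using N by (simp add: field_simps)
    moreover have "8 * a^2 * phi a = 2 * a" using False a0 by (simp add: phi_def field_simps power2_eq_square)
    ultimately show ?thesis using W by (simp add: a_def N_def)
  qed
qed

end
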